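(* Let $(\mathcal I,T)$ be of class $\mathcal{DRI}$, and let $\eta_n=\sup\{|g'(x)|:g\in\mathcal G^n,x\in\mathcal I\}$. (a) If $b'(0)>-1$, then $\eta_1<1$. If $b'(0)=-1$, then $\eta_1=1$ and $\eta_2<1$. (b) For all $n\ge2$, $$\eta_n\le\underline\eta_2^{\,1+\lfloor(n-2)/2\rfloor},\qquad\text{where }\underline\eta_2=\min(\eta_1^2,\eta_2)<1.$$
   Context: Let $\mathcal I=[0,1]$. A binary dynamical system is given by $c\in]0,1[$ and two $C^2$ bijections, $a:[0,1]\to[0,c]$ and $b:[0,1]\to[c,1]$. The map $T$ equals $a^{-1}$ on $]0,c[$ and $b^{-1}$ on $]c,1[$. Class $\mathcal{DR}$: $a$ is increasing, $b$ is decreasing, $a(0)=0$, $a(1)=c$, $b(0)=1$, $b(1)=c$, $a'>0$ and $b'<0$ on $[0,1]$, and $a'(x)<1$, $b'(x)>-1$ for $x\in]0,1]$. Class $\mathcal{DRI}$: class $\mathcal{DR}$ with moreover $a'(0)=1$. The block inverse branches are $g_m=a^{m-1}\circ b$ for $m\ge1$. $\mathcal G^n$ is the set of compositions $g_{m_1}\circ\cdots\circ g_{m_n}$ with $m_i\ge1$. *)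

theory Defs
  imports "HOL-Analysis.Analysis"
begin

definition D :: "(real \<Rightarrow> real) \<Rightarrow> real \<Rightarrow> real" where
  "D f x = vector_derivative f (at x within {0..1})"

definition C2_on_unit :: "(real \<Rightarrow> real) \<Rightarrow> bool" where
  "C2_on_unit f \<longleftrightarrow>
     (\<forall>x\<in>{0..1}. (f has_real_derivative D f x) (at x within {0..1})) \<and>
     (\<forall>x\<in>{0..1}. (D f has_real_derivative D (D f) x) (at x within {0..1})) \<and>
     continuous_on {0..1} (D (D f))"

definition binary_system :: "real \<Rightarrow> (real \<Rightarrow> real) \<Rightarrow> (real \<Rightarrow> real) \<Rightarrow> bool" where
  "binary_system c a b \<longleftrightarrow> 0 < c \<and> c < 1 \<and>
     bij_betw a {0..1} {0..c} \<and> bij_betw b {0..1} {c..1} \<and> C2_on_unit a \<and> C2_on_unit b"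

definition class_DR :: "real \<Rightarrow> (real \<Rightarrow> real) \<Rightarrow> (real \<Rightarrow> real) \<Rightarrow> bool" where
  "class_DR c a b \<longleftrightarrow> binary_system c a b \<and>
     mono_on {0..1} a \<and> antimono_on {0..1} b \<and>
     a 0 = 0 \<and> a 1 = c \<and> b 0 = 1 \<and> b 1 = c \<and>
     (\<forall>x\<in>{0..1}. D a x > 0 \<and> D b x < 0) \<and>
     (\<forall>x\<in>{0<..1}. D a x < 1 \<and> D b x > -1)"

definition class_DRI :: "real \<Rightarrow> (real \<Rightarrow> real) \<Rightarrow> (real \<Rightarrow> real) \<Rightarrow> bool" where
  "class_DRI c a b \<longleftrightarrow> class_DR c a b \<and> D a 0 = 1"

definition gbr :: "(real \<Rightarrow> real) \<Rightarrow> (real \<Rightarrow> real) \<Rightarrow> nat \<Rightarrow> real \<Rightarrow> real" where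
  "gbr a b m = (a ^^ (m - 1)) \<circ> b"

definition Gn :: "(real \<Rightarrow> real) \<Rightarrow> (real \<Rightarrow> real) \<Rightarrow> nat \<Rightarrow> (real \<Rightarrow> real) set" where
  "Gn a b n = {foldr (\<lambda>m f. gbr a b m \<circ> f) ms id | ms. length ms = n \<and> (\<forall>m\<in>set ms. 1 \<le> m)}"

definition eta :: "(real \<Rightarrow> real) \<Rightarrow> (real \<Rightarrow> real) \<Rightarrow> nat \<Rightarrow> real" where
  "eta a b n = Sup {\<bar>D g x\<bar> | g x. g \<in> Gn a b n \<and> x \<in> {0..1}}"

end

theory Submission
  imports Defs
begin

lemma D_unique:
  assumes "x \<in> {0..1}" "(f has_real_derivative d) (at x within {0..1})"
  shows "D f x = d"
  unfolding D_def
  using assms vector_derivative_within_closed_interval[of 0 1 x f d]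
  by (simp add: has_real_derivative_iff_has_vector_derivative)

definition good :: "(real \<Rightarrow> real) \<Rightarrow> bool" where
 "good f \<longleftrightarrow> (\<forall>x\<in>{0..1}. f x \<in> {0..1} \<and> (f has_real_derivative D f x) (at x within {0..1}) \<and> \<bar>D f x\<bar> \<le> 1)"

lemma good_comp:
  assumes "good f" "good g"
  shows "good (f \<circ> g)" and "\<And>x. x\<in>{0..1} \<Longrightarrow> D (f\<circ>g) x = D f (g x) * D g x"
proof -
  have der: "((f\<circ>g) has_real_derivative D f (g x) * D g x) (at x within {0..1})" if "x\<in>{0..1}" for x
  proof -
    have gx: "g x \<in> {0..1}" "(g has_real_derivative D g x) (at x within {0..1})"
      using assms(2) that unfolding good_def by auto
    have "(f has_real_derivative D f (g x)) (at (g x) within {0..1})"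
      using assms(1) gx unfolding good_def by auto
    moreover have "g ` {0..1} \<subseteq> {0..1}" using assms(2) unfolding good_def by auto
    ultimately have "(f has_real_derivative D f (g x)) (at (g x) within g ` {0..1})"
      by (rule DERIV_subset)
    then show ?thesis using gx(2) by (rule DERIV_image_chain)
  qed
  show D: "\<And>x. x\<in>{0..1} \<Longrightarrow> D (f\<circ>g) x = D f (g x) * D g x" using der D_unique by blast
  show "good (f\<circ>g)" unfolding good_def
  proof
    fix x :: real assume x: "x \<in> {0..1}"
    have gx: "g x \<in> {0..1}" "\<bar>D g x\<bar> \<le> 1" using assms(2) x unfolding good_def by auto
    moreover have fx: "f (g x) \<in> {0..1}" "\<bar>D f (g x)\<bar> \<le> 1"
      using assms(1) gx(1) unfolding good_def by auto
    ultimately have "\<bar>D f (g x) * D g x\<bar> \<le> 1" by (simp add: abs_mult mult_le_one)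
    then show "(f\<circ>g) x \<in> {0..1} \<and> ((f\<circ>g) has_real_derivative D (f\<circ>g) x) (at x within {0..1}) \<and> \<bar>D (f\<circ>g) x\<bar> \<le> 1"
      using der[OF x] D[OF x] fx by simp
  qed
qed

lemma good_id: "good id"
proof -
  have d: "(id has_real_derivative 1) (at x within {0..1})" for x :: real
    unfolding id_def by (rule DERIV_ident)
  show ?thesis unfolding good_def using d D_unique[OF _ d] by auto
qed

lemma foldr_comp:
  "foldr (\<lambda>m f. gbr a b m \<circ> f) ms h = foldr (\<lambda>m f. gbr a b m \<circ> f) ms id \<circ> h"
  by (induction ms) (auto simp: comp_assoc)

lemma Gn_add:
  assumes "g \<in> Gn a b (p+q)"
  shows "\<exists>h k. h \<in> Gn a b p \<and> k \<in> Gn a b q \<and> g = h \<circ> k"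
proof -
  obtain ms where ms: "g = foldr (\<lambda>m f. gbr a b m \<circ> f) ms id" "length ms = p+q" "\<forall>m\<in>set ms. 1 \<le> m"
    using assms unfolding Gn_def by auto
  let ?F = "\<lambda>xs. foldr (\<lambda>m f. gbr a b m \<circ> f) xs id"
  have "g = ?F (take p ms @ drop p ms)" using ms(1) by simp
  also have "\<dots> = foldr (\<lambda>m f. gbr a b m \<circ> f) (take p ms) (?F (drop p ms))"
    by (simp only: foldr_append comp_apply)
  also have "\<dots> = ?F (take p ms) \<circ> ?F (drop p ms)"
    by (rule foldr_comp)
  finally have "g = ?F (take p ms) \<circ> ?F (drop p ms)" .
  moreover have "?F (take p ms) \<in> Gn a b p" unfolding Gn_def using ms(2,3)
    by (intro CollectI exI[of _ "take p ms"] conjI refl) (auto dest: in_set_takeD)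
  moreover have "?F (drop p ms) \<in> Gn a b q" unfolding Gn_def using ms(2,3)
    by (intro CollectI exI[of _ "drop p ms"] conjI refl) (auto dest: in_set_dropD)
  ultimately show ?thesis by blast
qed

lemma Gn_ne: "foldr (\<lambda>m f. gbr a b m \<circ> f) (replicate n 1) id \<in> Gn a b n"
  unfolding Gn_def by (intro CollectI exI[of _ "replicate n (1::nat)"] conjI refl) auto

lemma Gn1: "g \<in> Gn a b 1 \<Longrightarrow> \<exists>m\<ge>1. g = gbr a b m"
  unfolding Gn_def by (auto simp: length_Suc_conv)

lemma Gn2: "g \<in> Gn a b 2 \<Longrightarrow> \<exists>m\<ge>1. \<exists>k\<ge>1. g = gbr a b m \<circ> gbr a b k"
  unfolding Gn_def by (clarsimp simp: length_Suc_conv numeral_2_eq_2) blast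

lemma b_Gn1: "b \<in> Gn a b 1"
proof -
  have "foldr (\<lambda>m f. gbr a b m \<circ> f) [1] id = b" by (auto simp: gbr_def)
  then show ?thesis unfolding Gn_def by (intro CollectI exI[of _ "[1]"]) auto
qed

locale dri =
  fixes c :: real and a b :: "real \<Rightarrow> real"
  assumes DRI: "class_DRI c a b"
begin

lemma c01: "0 < c" "c < 1"
  using DRI unfolding class_DRI_def class_DR_def binary_system_def by auto

lemma a_img: "x \<in> {0..1} \<Longrightarrow> a x \<in> {0..c}"
  using DRI unfolding class_DRI_def class_DR_def binary_system_def
  by (meson bij_betwE)

lemma b_img: "x \<in> {0..1} \<Longrightarrow> b x \<in> {c..1}"
  using DRI unfolding class_DRI_def class_DR_def binary_system_def
  by (meson bij_betwE)

lemma a_der: "x \<in> {0..1} \<Longrightarrow> (a has_real_derivative D a x) (at x within {0..1})"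
  and b_der: "x \<in> {0..1} \<Longrightarrow> (b has_real_derivative D b x) (at x within {0..1})"
  using DRI unfolding class_DRI_def class_DR_def binary_system_def C2_on_unit_def by auto

lemma Db_cont: "continuous_on {0..1} (D b)"
  and Da_cont: "continuous_on {0..1} (D a)"
  using DRI unfolding class_DRI_def class_DR_def binary_system_def C2_on_unit_def
  by (meson DERIV_continuous continuous_on_eq_continuous_within)+

lemma Dsign: "x \<in> {0..1} \<Longrightarrow> D a x > 0 \<and> D b x < 0"
  and Dlt: "x \<in> {0<..1} \<Longrightarrow> D a x < 1 \<and> D b x > -1"
  and Da0: "D a 0 = 1"
  using DRI unfolding class_DRI_def class_DR_def by auto

lemma Db0: "D b 0 \<ge> -1"
proof -
  have lim: "(D b \<longlongrightarrow> D b 0) (at 0 within {0..1})"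
    using Db_cont unfolding continuous_on_def by auto
  have eq: "at (0::real) within {0..1} = at_right 0" by (rule at_within_Icc_at_right) simp
  have all: "\<forall>y::real. 0 < y \<and> y < 1 \<longrightarrow> -1 \<le> D b y"
  proof clarify
    fix y :: real assume "0 < y" "y < 1"
    then have "y \<in> {0<..1}" by auto
    from Dlt[OF this] show "-1 \<le> D b y" by simp
  qed
  have ev: "eventually (\<lambda>x. -1 \<le> D b x) (at_right (0::real))"
    unfolding eventually_at_right_field using all by (intro exI[of _ 1]) auto
  show ?thesis
    using tendsto_lowerbound[OF lim[unfolded eq] ev] by simp
qed

lemma good_a: "good a"
  unfolding good_def
proof
  fix x :: real assume x: "x \<in> {0..1}"
  have "\<bar>D a x\<bar> \<le> 1"
  proof (cases "x = 0")
    case True then show ?thesis using Da0 by simp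
  next
    case False then show ?thesis using x Dsign[OF x] Dlt[of x] by auto
  qed
  then show "a x \<in> {0..1} \<and> (a has_real_derivative D a x) (at x within {0..1}) \<and> \<bar>D a x\<bar> \<le> 1"
    using a_img[OF x] c01 a_der[OF x] by auto
qed

lemma good_b: "good b"
  unfolding good_def
proof
  fix x :: real assume x: "x \<in> {0..1}"
  have "\<bar>D b x\<bar> \<le> 1"
  proof (cases "x = 0")
    case True then show ?thesis using Db0 Dsign[of 0] by simp
  next
    case False then show ?thesis using x Dsign[OF x] Dlt[of x] by auto
  qed
  then show "b x \<in> {0..1} \<and> (b has_real_derivative D b x) (at x within {0..1}) \<and> \<bar>D b x\<bar> \<le> 1"
    using b_img[OF x] c01 b_der[OF x] by auto
qed

lemma good_pow: "good (a ^^ k)"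
proof (induction k)
  case 0 then show ?case by (simp only: funpow.simps good_id)
next
  case (Suc k) then show ?case unfolding funpow.simps by (rule good_comp(1)[OF good_a])
qed

lemma good_gbr: "good (gbr a b m)"
  unfolding gbr_def by (rule good_comp(1)[OF good_pow good_b])

lemma good_Gn: "g \<in> Gn a b n \<Longrightarrow> good g"
proof -
  have "good (foldr (\<lambda>m f. gbr a b m \<circ> f) ms id)" for ms
  proof (induction ms)
    case Nil then show ?case using good_id by (simp add: id_def)
  next
    case (Cons m ms)
    have e: "foldr (\<lambda>m f. gbr a b m \<circ> f) (m#ms) id = gbr a b m \<circ> foldr (\<lambda>m f. gbr a b m \<circ> f) ms id"
      by simp
    show ?case unfolding e by (rule good_comp(1)[OF good_gbr Cons.IH])
  qed
  then show "g \<in> Gn a b n \<Longrightarrow> good g" unfolding Gn_def by auto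
qed

lemma goodD: "good f \<Longrightarrow> x \<in> {0..1} \<Longrightarrow> f x \<in> {0..1} \<and> \<bar>D f x\<bar> \<le> 1"
  unfolding good_def by auto

lemma theta: "\<exists>\<theta><1. \<forall>y\<in>{c..1}. \<bar>D a y\<bar> \<le> \<theta> \<and> \<bar>D b y\<bar> \<le> \<theta>"
proof -
  have sub: "{c..1} \<subseteq> {0..1}" using c01 by auto
  obtain xa where xa: "xa \<in> {c..1}" "\<forall>y\<in>{c..1}. D a y \<le> D a xa"
    using continuous_attains_sup[of "{c..1}" "D a"] continuous_on_subset[OF Da_cont sub] c01
    by auto
  obtain xb where xb: "xb \<in> {c..1}" "\<forall>y\<in>{c..1}. - D b y \<le> - D b xb"
    using continuous_attains_sup[of "{c..1}" "\<lambda>y. - D b y"]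
      continuous_on_minus[OF continuous_on_subset[OF Db_cont sub]] c01
    by auto
  have "D a xa < 1" "- D b xb < 1" using Dlt[of xa] Dlt[of xb] xa(1) xb(1) c01 by auto
  moreover have "\<forall>y\<in>{c..1}. \<bar>D a y\<bar> \<le> max (D a xa) (- D b xb) \<and> \<bar>D b y\<bar> \<le> max (D a xa) (- D b xb)"
  proof
    fix y assume y: "y \<in> {c..1}"
    then have "y \<in> {0..1}" using sub by auto
    moreover have "D a y \<le> D a xa" using xa(2) y by blast
    moreover have "- D b y \<le> - D b xb" using xb(2) y by blast
    ultimately show "\<bar>D a y\<bar> \<le> max (D a xa) (- D b xb) \<and> \<bar>D b y\<bar> \<le> max (D a xa) (- D b xb)"
      using Dsign[of y] by auto
  qed
  ultimately show ?thesis by (intro exI[of _ "max (D a xa) (- D b xb)"]) auto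
qed

lemma gbr_D1: "x \<in> {0..1} \<Longrightarrow> \<bar>D (gbr a b m) x\<bar> \<le> \<bar>D b x\<bar>"
proof -
  assume x: "x \<in> {0..1}"
  have "D (gbr a b m) x = D (a ^^ (m-1)) (b x) * D b x"
    unfolding gbr_def using good_comp(2)[OF good_pow good_b x] .
  moreover have "\<bar>D (a ^^ (m-1)) (b x)\<bar> \<le> 1" using goodD[OF good_pow goodD[OF good_b x, THEN conjunct1]] by auto
  ultimately show ?thesis by (simp add: abs_mult mult_left_le_one_le)
qed

lemma gbr_D2:
  assumes th: "\<forall>y\<in>{c..1}. \<bar>D a y\<bar> \<le> \<theta>" and m: "m \<ge> 2" and x: "x \<in> {0..1}"
  shows "\<bar>D (gbr a b m) x\<bar> \<le> \<theta>"
proof -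
  have eq: "gbr a b m = (a ^^ (m-2) \<circ> a) \<circ> b"
  proof -
    have "m - 1 = Suc (m - 2)" using m by simp
    then show ?thesis unfolding gbr_def by (simp only: funpow_Suc_right)
  qed
  have bx: "b x \<in> {0..1}" "b x \<in> {c..1}" using goodD[OF good_b x] b_img[OF x] by auto
  have E: "D (gbr a b m) x = D (a ^^ (m-2)) (a (b x)) * D a (b x) * D b x"
    unfolding eq using good_comp(2)[OF good_comp(1)[OF good_pow good_a] good_b x]
      good_comp(2)[OF good_pow good_a bx(1)] by simp
  have B1: "\<bar>D (a ^^ (m-2)) (a (b x))\<bar> \<le> 1"
    using goodD[OF good_pow goodD[OF good_a bx(1), THEN conjunct1]] by auto
  have B2: "\<bar>D b x\<bar> \<le> 1" using goodD[OF good_b x] by auto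
  have B3: "\<bar>D a (b x)\<bar> \<le> \<theta>" using th bx by auto
  have "\<bar>D (gbr a b m) x\<bar> = \<bar>D (a ^^ (m-2)) (a (b x))\<bar> * \<bar>D a (b x)\<bar> * \<bar>D b x\<bar>"
    unfolding E by (simp add: abs_mult)
  also have "\<dots> \<le> 1 * \<theta> * 1"
    by (intro mult_mono) (use B1 B2 B3 in auto)
  finally show ?thesis by simp
qed

lemma Gn_le1: "g \<in> Gn a b n \<Longrightarrow> x \<in> {0..1} \<Longrightarrow> \<bar>D g x\<bar> \<le> 1"
  using goodD[OF good_Gn] by blast

lemma eta_upper: "g \<in> Gn a b n \<Longrightarrow> x \<in> {0..1} \<Longrightarrow> \<bar>D g x\<bar> \<le> eta a b n"
  unfolding eta_def
  by (rule cSup_upper) (auto intro!: bdd_aboveI[of _ 1] simp: Gn_le1)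

lemma eta_least: "(\<And>g x. g \<in> Gn a b n \<Longrightarrow> x \<in> {0..1} \<Longrightarrow> \<bar>D g x\<bar> \<le> B) \<Longrightarrow> eta a b n \<le> B"
  unfolding eta_def
  by (rule cSup_least) (use Gn_ne in fastforce)+

lemma eta_nonneg: "eta a b n \<ge> 0"
proof -
  have "\<bar>D (foldr (\<lambda>m f. gbr a b m \<circ> f) (replicate n 1) id) 0\<bar> \<le> eta a b n"
    by (rule eta_upper[OF Gn_ne]) simp
  then show ?thesis by (meson abs_ge_zero order_trans)
qed

lemma eta_le1: "eta a b n \<le> 1"
  by (rule eta_least) (rule Gn_le1)

lemma eta_mult: "eta a b (p+q) \<le> eta a b p * eta a b q"
proof (rule eta_least)
  fix g and x :: real assume g: "g \<in> Gn a b (p+q)" and x: "x \<in> {0..1}"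
  obtain h k where hk: "h \<in> Gn a b p" "k \<in> Gn a b q" "g = h \<circ> k" using Gn_add[OF g] by blast
  have kx: "k x \<in> {0..1}" using goodD[OF good_Gn[OF hk(2)] x] by auto
  have "\<bar>D g x\<bar> = \<bar>D h (k x)\<bar> * \<bar>D k x\<bar>"
    using hk(3) good_comp(2)[OF good_Gn[OF hk(1)] good_Gn[OF hk(2)] x] by (simp add: abs_mult)
  also have "\<dots> \<le> eta a b p * eta a b q"
    by (rule mult_mono) (use eta_upper[OF hk(1) kx] eta_upper[OF hk(2) x] eta_nonneg in auto)
  finally show "\<bar>D g x\<bar> \<le> eta a b p * eta a b q" .
qed

lemma eta2_lt1: "eta a b 2 < 1"
proof -
  obtain \<theta> where th: "\<theta> < 1" "\<forall>y\<in>{c..1}. \<bar>D a y\<bar> \<le> \<theta> \<and> \<bar>D b y\<bar> \<le> \<theta>" using theta by blast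
  have "eta a b 2 \<le> \<theta>"
  proof (rule eta_least)
    fix g and x :: real assume g: "g \<in> Gn a b 2" and x: "x \<in> {0..1}"
    obtain m k where mk: "m \<ge> 1" "k \<ge> 1" "g = gbr a b m \<circ> gbr a b k" using Gn2[OF g] by blast
    have kx: "gbr a b k x \<in> {0..1}" using goodD[OF good_gbr x] by auto
    have eq: "\<bar>D g x\<bar> = \<bar>D (gbr a b m) (gbr a b k x)\<bar> * \<bar>D (gbr a b k) x\<bar>"
      using mk(3) good_comp(2)[OF good_gbr good_gbr x] by (simp add: abs_mult)
    have b1: "\<bar>D (gbr a b m) (gbr a b k x)\<bar> \<le> 1" "\<bar>D (gbr a b k) x\<bar> \<le> 1"
      using goodD[OF good_gbr kx] goodD[OF good_gbr x] by auto
    show "\<bar>D g x\<bar> \<le> \<theta>"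
    proof (cases "k = 1")
      case True
      then have "gbr a b k x = b x" by (simp add: gbr_def)
      then have "\<bar>D (gbr a b m) (gbr a b k x)\<bar> \<le> \<theta>"
        using gbr_D1[OF kx, of m] th(2) b_img[OF x] by fastforce
      then show ?thesis unfolding eq using b1
        by (metis abs_ge_zero mult_right_le_one_le order_trans)
    next
      case False
      then have "\<bar>D (gbr a b k) x\<bar> \<le> \<theta>" using gbr_D2[of \<theta> k x] th(2) mk(2) x by auto
      then show ?thesis unfolding eq using b1
        by (metis abs_ge_zero mult_left_le_one_le order_trans)
    qed
  qed
  then show ?thesis using th by simp
qed

lemma eta1_lt1: "D b 0 > -1 \<Longrightarrow> eta a b 1 < 1"
proof -
  assume h: "D b 0 > -1"
  obtain x0 where x0: "x0 \<in> {0..1}" "\<forall>y\<in>{0..1}. - D b y \<le> - D b x0"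
    using continuous_attains_sup[of "{0..1}" "\<lambda>y. - D b y"] continuous_on_minus[OF Db_cont]
    by auto
  have lt: "- D b x0 < 1"
    using h Dlt[of x0] x0(1) by (cases "x0 = 0") auto
  have "eta a b 1 \<le> - D b x0"
  proof (rule eta_least)
    fix g and x :: real assume g: "g \<in> Gn a b 1" and x: "x \<in> {0..1}"
    obtain m where "g = gbr a b m" using Gn1[OF g] by blast
    then show "\<bar>D g x\<bar> \<le> - D b x0" using gbr_D1[OF x, of m] x0(2) x Dsign[OF x] by fastforce
  qed
  then show ?thesis using lt by simp
qed

lemma eta1_eq1: "D b 0 = -1 \<Longrightarrow> eta a b 1 = 1"
  using eta_upper[OF b_Gn1, of 0] eta_le1[of 1] by simp

lemma eta_pow: "n \<ge> 2 \<Longrightarrow> eta a b n \<le> eta a b 2 ^ (1 + (n - 2) div 2)"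
proof (induction n rule: less_induct)
  case (less n)
  show ?case
  proof (cases "n \<le> 3")
    case True
    then have "n = 2 \<or> n = 3" using less.prems by auto
    then show ?thesis
    proof
      assume "n = 3"
      then have "eta a b n \<le> eta a b 2 * eta a b 1" using eta_mult[of 2 1] by simp
      also have "\<dots> \<le> eta a b 2" using eta_le1[of 1] eta_nonneg[of 2] eta_nonneg[of 1] by (simp add: mult_right_le_one_le)
      finally show ?thesis using \<open>n = 3\<close> by simp
    qed simp
  next
    case False
    then have nn: "2 + (n-2) = n" by simp
    have "eta a b n \<le> eta a b 2 * eta a b (n-2)" using eta_mult[of 2 "n-2", unfolded nn] .
    also have "\<dots> \<le> eta a b 2 * eta a b 2 ^ (1 + (n - 2 - 2) div 2)"
      using less.IH[of "n-2"] False eta_nonneg[of 2] by (simp add: mult_left_mono)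
    also have "\<dots> = eta a b 2 ^ (1 + (n - 2) div 2)"
    proof -
      have "1 + (n - 2) div 2 = Suc (1 + (n - 2 - 2) div 2)" using False by (simp add: div_if)
      then show ?thesis by simp
    qed
    finally show ?thesis .
  qed
qed

end

theorem lemma7p3:
  fixes c :: real and a b :: "real \<Rightarrow> real"
  assumes "class_DRI c a b"
  shows "(D b 0 > -1 \<longrightarrow> eta a b 1 < 1)
     \<and> (D b 0 = -1 \<longrightarrow> eta a b 1 = 1 \<and> eta a b 2 < 1)
     \<and> min ((eta a b 1)\<^sup>2) (eta a b 2) < 1
     \<and> (\<forall>n\<ge>2. eta a b n \<le> (min ((eta a b 1)\<^sup>2) (eta a b 2)) ^ (1 + (n - 2) div 2))"
proof -
  interpret dri c a b using assms by unfold_locales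
  have m: "min ((eta a b 1)\<^sup>2) (eta a b 2) = eta a b 2"
    using eta_mult[of 1 1, unfolded one_add_one] by (simp add: power2_eq_square min_absorb2)
  show ?thesis unfolding m using eta1_lt1 eta1_eq1 eta2_lt1 eta_pow by auto
qed

end
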